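(* For all $(t,z,h)\in\mathcal{O}$, $0\le\widehat J(t,z,h)\le\frac{Iz}{r}\big(1-e^{-r(T-t)}\big)$.
   Context: Fix constants $T>0$, $r>0$, $\mu\in\mathbb{R}$, $\sigma>0$, $\rho>0$, $m^0\ge 0$, $m^1\ge 0$, $\kappa>0$, $\delta>0$, $\alpha\in(0,1)$, $I>0$ and a number $f(I)>0$. Write $\mathbb{R}_+=(0,\infty)$, $\mathcal{O}=[0,T]\times\mathbb{R}_+^2$, $\theta=(\mu-r)/\sigma$. Let $(\Omega,\mathcal{F},\mathbb{F},\mathbb{P})$ be a complete filtered probability space satisfying the usual conditions, carrying a standard $\mathbb{F}$-Brownian motion $B$. Let $\widehat u(z,h)=(1-\alpha)(z/\alpha)^{\alpha/(\alpha-1)}h$. For $(t,z,h)\in\mathcal{O}$ and $s\in[t,T]$ let $H^2_s=he^{-\delta(s-t)}+\frac{f(I)}{\delta}(1-e^{-\delta(s-t)})$, $M^{H^2}_s=m^0+m^1(H^2_s)^{-\kappa}$, and let $Z^2$ solve $dZ^2_s=(\rho-r+M^{H^2}_s)Z^2_s\,ds-\theta Z^2_s\,dB_s$, $Z^2_t=z$. Define $W(t,z,h)=\mathbb{E}\big[\int_t^T e^{-\int_t^s(\rho+M^{H^2}_u)du}\,\widehat u(Z^2_s,H^2_s)\,ds\big]$; subscripts denote partial derivatives. For $z,h>0$ and $s\ge0$ let $H^1_s=he^{-\delta s}$, $M^{H^1}_s=m^0+m^1(H^1_s)^{-\kappa}$ and $Z^1_s=z\exp\big(-(r+\tfrac12\theta^2)s-\theta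 B_s+\int_0^s(\rho+M^{H^1}_u)du\big)$, with $\mathbb{E}_{z,h}$ the corresponding expectation. For $(t,z,h)\in\mathcal{O}$, $\widehat J(t,z,h)=\sup_{0\le\tau\le T-t}\mathbb{E}_{z,h}\Big[\int_0^\tau\Big(Iz\,e^{-rs-\theta B_s-\frac12\theta^2 s}-e^{-\int_0^s(\rho+M^{H^1}_u)du}f(I)W_h(t+s,Z^1_s,H^1_s)\Big)ds\Big]$ over $\mathbb{F}$-stopping times with values in $[0,T-t]$. *)

theory Defs
  imports "HOL-Probability.Probability"
begin

text \<open>Time index is real; only times t \<ge> 0 are relevant.  A filtration on [0,inf)
  extends to all reals by F t = F 0 for t < 0, so this is no restriction.\<close>

definition usual_filtered_prob_space :: "'a measure \<Rightarrow> (real \<Rightarrow> 'a measure) \<Rightarrow> bool" where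
  "usual_filtered_prob_space M F \<longleftrightarrow>
     prob_space M \<and>
     (\<forall>A N. N \<in> null_sets M \<and> A \<subseteq> N \<longrightarrow> A \<in> sets M) \<and>
     filtration (space M) F \<and>
     (\<forall>t. sets (F t) \<subseteq> sets M) \<and>
     (\<forall>t. null_sets M \<subseteq> sets (F t)) \<and>
     (\<forall>t. sets (F t) = (\<Inter>u\<in>{t<..}. sets (F u)))"

definition F_brownian_motion :: "'a measure \<Rightarrow> (real \<Rightarrow> 'a measure) \<Rightarrow> (real \<Rightarrow> 'a \<Rightarrow> real) \<Rightarrow> bool" where
  "F_brownian_motion M F B \<longleftrightarrow>
     (\<forall>t\<ge>0. B t \<in> borel_measurable (F t)) \<and>
     (\<forall>\<omega>\<in>space M. B 0 \<omega> = 0 \<and> continuous_on {0..} (\<lambda>t. B t \<omega>)) \<and>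
     (\<forall>s t. 0 \<le> s \<and> s < t \<longrightarrow>
        distributed M lborel (\<lambda>\<omega>. B t \<omega> - B s \<omega>) (\<lambda>x. ennreal (normal_density 0 (sqrt (t - s)) x)) \<and>
        (\<forall>A\<in>sets (F s). \<forall>C\<in>sets borel.
           measure M (A \<inter> ((\<lambda>\<omega>. B t \<omega> - B s \<omega>) -` C \<inter> space M))
             = measure M A * measure M ((\<lambda>\<omega>. B t \<omega> - B s \<omega>) -` C \<inter> space M)))"

definition theta :: "real \<Rightarrow> real \<Rightarrow> real \<Rightarrow> real" where
  "theta \<mu> r \<sigma> = (\<mu> - r) / \<sigma>"

definition uhat :: "real \<Rightarrow> real \<Rightarrow> real \<Rightarrow> real" where
  "uhat \<alpha> z h = (1 - \<alpha>) * (z / \<alpha>) powr (\<alpha> / (\<alpha> - 1)) * h"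

definition MH :: "real \<Rightarrow> real \<Rightarrow> real \<Rightarrow> real \<Rightarrow> real" where
  "MH m0 m1 \<kappa> x = m0 + m1 * x powr (- \<kappa>)"

definition H2 :: "real \<Rightarrow> real \<Rightarrow> real \<Rightarrow> real \<Rightarrow> real \<Rightarrow> real" where
  "H2 \<delta> fI t h s = h * exp (- \<delta> * (s - t)) + fI / \<delta> * (1 - exp (- \<delta> * (s - t)))"

text \<open>Z^2_s: the (unique strong) solution of the linear SDE
  dZ = (rho - r + M^{H^2}) Z ds - theta Z dB, Z_t = z, written in closed form.\<close>
definition Z2 :: "(real \<Rightarrow> 'a \<Rightarrow> real) \<Rightarrow> real \<Rightarrow> real \<Rightarrow> real \<Rightarrow> real \<Rightarrow> real \<Rightarrow> real \<Rightarrow> real \<Rightarrow> real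
                  \<Rightarrow> real \<Rightarrow> real \<Rightarrow> real \<Rightarrow> real \<Rightarrow> 'a \<Rightarrow> real" where
  "Z2 B \<theta> r \<rho> m0 m1 \<kappa> \<delta> fI t z h s \<omega> =
     z * exp ((\<integral>u\<in>{t..s}. (\<rho> - r + MH m0 m1 \<kappa> (H2 \<delta> fI t h u)) \<partial>lborel)
              - \<theta> * (B s \<omega> - B t \<omega>) - \<theta>\<^sup>2 / 2 * (s - t))"

definition Wfun :: "'a measure \<Rightarrow> (real \<Rightarrow> 'a \<Rightarrow> real) \<Rightarrow> real \<Rightarrow> real \<Rightarrow> real \<Rightarrow> real \<Rightarrow> real \<Rightarrow> real
                   \<Rightarrow> real \<Rightarrow> real \<Rightarrow> real \<Rightarrow> real \<Rightarrow> real \<Rightarrow> real \<Rightarrow> real \<Rightarrow> real" where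
  "Wfun M B T \<theta> r \<rho> m0 m1 \<kappa> \<delta> \<alpha> fI t z h =
     (\<integral>\<omega>. (\<integral>s\<in>{t..T}.
        exp (- (\<integral>u\<in>{t..s}. (\<rho> + MH m0 m1 \<kappa> (H2 \<delta> fI t h u)) \<partial>lborel))
        * uhat \<alpha> (Z2 B \<theta> r \<rho> m0 m1 \<kappa> \<delta> fI t z h s \<omega>) (H2 \<delta> fI t h s) \<partial>lborel) \<partial>M)"

definition H1 :: "real \<Rightarrow> real \<Rightarrow> real \<Rightarrow> real" where
  "H1 \<delta> h s = h * exp (- \<delta> * s)"

definition Z1 :: "(real \<Rightarrow> 'a \<Rightarrow> real) \<Rightarrow> real \<Rightarrow> real \<Rightarrow> real \<Rightarrow> real \<Rightarrow> real \<Rightarrow> real \<Rightarrow> real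
                  \<Rightarrow> real \<Rightarrow> real \<Rightarrow> real \<Rightarrow> 'a \<Rightarrow> real" where
  "Z1 B \<theta> r \<rho> m0 m1 \<kappa> \<delta> z h s \<omega> =
     z * exp (- (r + \<theta>\<^sup>2 / 2) * s - \<theta> * B s \<omega>
              + (\<integral>u\<in>{0..s}. (\<rho> + MH m0 m1 \<kappa> (H1 \<delta> h u)) \<partial>lborel))"

definition Jhat :: "'a measure \<Rightarrow> (real \<Rightarrow> 'a measure) \<Rightarrow> (real \<Rightarrow> 'a \<Rightarrow> real)
     \<Rightarrow> real \<Rightarrow> real \<Rightarrow> real \<Rightarrow> real \<Rightarrow> real \<Rightarrow> real \<Rightarrow> real \<Rightarrow> real \<Rightarrow> real \<Rightarrow> real \<Rightarrow> real \<Rightarrow> real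
     \<Rightarrow> real \<Rightarrow> real \<Rightarrow> real \<Rightarrow> real" where
  "Jhat M F B T r \<mu> \<sigma> \<rho> m0 m1 \<kappa> \<delta> \<alpha> I fI t z h =
     (let \<theta> = theta \<mu> r \<sigma> in
      SUP \<tau> \<in> {\<tau>. stopping_time F \<tau> \<and> (\<forall>\<omega>\<in>space M. 0 \<le> \<tau> \<omega> \<and> \<tau> \<omega> \<le> T - t)}.
        (\<integral>\<omega>. (\<integral>s\<in>{0..\<tau> \<omega>}.
            (I * z * exp (- r * s - \<theta> * B s \<omega> - \<theta>\<^sup>2 / 2 * s)
             - exp (- (\<integral>u\<in>{0..s}. (\<rho> + MH m0 m1 \<kappa> (H1 \<delta> h u)) \<partial>lborel)) * fI
               * deriv (\<lambda>h'. Wfun M B T \<theta> r \<rho> m0 m1 \<kappa> \<delta> \<alpha> fI (t + s)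
                                   (Z1 B \<theta> r \<rho> m0 m1 \<kappa> \<delta> z h s \<omega>) h')
                       (H1 \<delta> h s)) \<partial>lborel) \<partial>M))"

end

theory Submission
  imports Defs
begin


lemma floor_div_approx:
  fixes x N :: real assumes "N > 0"
  shows "x - 1 / N \<le> real_of_int \<lfloor>x * N\<rfloor> / N" "real_of_int \<lfloor>x * N\<rfloor> / N \<le> x"
proof -
  have f1: "real_of_int \<lfloor>x * N\<rfloor> \<le> x * N" "x * N < real_of_int \<lfloor>x * N\<rfloor> + 1" by linarith+
  have "(x * N - 1) / N \<le> real_of_int \<lfloor>x * N\<rfloor> / N" using f1 assms by (intro divide_right_mono) auto
  moreover have "(x * N - 1) / N = x - 1 / N" using assms by (simp add: field_simps)
  ultimately show "x - 1 / N \<le> real_of_int \<lfloor>x * N\<rfloor> / N" by simp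
  show "real_of_int \<lfloor>x * N\<rfloor> / N \<le> x" using f1 assms by (simp add: field_simps)
qed

lemma joint_meas_B:
  fixes B :: "real \<Rightarrow> 'a \<Rightarrow> real"
  assumes meas: "\<And>s. s \<ge> 0 \<Longrightarrow> B s \<in> borel_measurable M"
    and cont: "\<And>\<omega>. \<omega> \<in> space M \<Longrightarrow> continuous_on {0..} (\<lambda>s. B s \<omega>)"
  shows "(\<lambda>p. B (max 0 (fst p)) (snd p)) \<in> borel_measurable (lborel \<Otimes>\<^sub>M M)"
proof (rule borel_measurable_LIMSEQ_real)
  define d where "d n s = max 0 (real_of_int \<lfloor>max 0 s * (Suc n)\<rfloor> / Suc n)" for n :: nat and s :: real
  show "(\<lambda>n. B (d n (fst p)) (snd p)) \<longlonglongrightarrow> B (max 0 (fst p)) (snd p)"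
    if p: "p \<in> space (lborel \<Otimes>\<^sub>M M)" for p
  proof -
    have om: "snd p \<in> space M" using p by (auto simp: space_pair_measure)
    let ?x = "max 0 (fst p)"
    have b1: "dist (d n (fst p)) ?x \<le> 1 / Suc n" for n
    proof -
      have "0 \<le> real_of_int \<lfloor>?x * Suc n\<rfloor>" by simp
      then have "d n (fst p) = real_of_int \<lfloor>?x * Suc n\<rfloor> / Suc n" by (simp add: d_def)
      then show ?thesis using floor_div_approx[of "real (Suc n)" ?x] by (simp add: dist_real_def)
    qed
    have lim0: "(\<lambda>n. 1 / real (Suc n)) \<longlonglongrightarrow> 0" using LIMSEQ_inverse_real_of_nat by (simp add: inverse_eq_divide)
    have dlim: "(\<lambda>n. d n (fst p)) \<longlonglongrightarrow> ?x"
    proof (rule tendsto_dist_iff[THEN iffD2], rule Lim_null_comparison)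
      show "\<forall>\<^sub>F n in sequentially. norm (dist (d n (fst p)) ?x) \<le> 1 / real (Suc n)"
        using b1 by (intro always_eventually) simp
    qed (rule lim0)
    have dge: "d n (fst p) \<in> {0..}" for n by (simp add: d_def)
    have "continuous_on {0..} (\<lambda>s. B s (snd p))" using cont om by auto
    from continuous_on_tendsto_compose[OF this dlim] dge show ?thesis by auto
  qed
  show "(\<lambda>p. B (d i (fst p)) (snd p)) \<in> borel_measurable (lborel \<Otimes>\<^sub>M M)" for i
  proof -
    have fk: "(\<lambda>p. B (max 0 (real_of_int k / real (Suc i))) (snd p)) \<in> borel_measurable (lborel \<Otimes>\<^sub>M M)" for k
    proof -
      have [measurable]: "B (max 0 (real_of_int k / real (Suc i))) \<in> borel_measurable M" by (rule meas) simp
      show ?thesis by measurable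
    qed
    have g: "(\<lambda>p. \<lfloor>max 0 (fst p) * real (Suc i)\<rfloor>) \<in> lborel \<Otimes>\<^sub>M M \<rightarrow>\<^sub>M count_space UNIV"
      by measurable
    have "(\<lambda>p. B (max 0 (real_of_int \<lfloor>max 0 (fst p) * real (Suc i)\<rfloor> / real (Suc i))) (snd p))
       \<in> borel_measurable (lborel \<Otimes>\<^sub>M M)"
      using measurable_compose_countable[where f="\<lambda>k p. B (max 0 (real_of_int k / real (Suc i))) (snd p)", OF fk g] by simp
    then show ?thesis by (simp add: d_def)
  qed
qed


lemma normal_density_exp:
  assumes "\<sigma> > 0"
  shows "normal_density 0 \<sigma> x * exp (c * x) = exp (c\<^sup>2 * \<sigma>\<^sup>2 / 2) * normal_density (c * \<sigma>\<^sup>2) \<sigma> x"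
proof -
  have "-(x - 0)\<^sup>2 / (2 * \<sigma>\<^sup>2) + c * x = c\<^sup>2 * \<sigma>\<^sup>2 / 2 + (-(x - c * \<sigma>\<^sup>2)\<^sup>2 / (2 * \<sigma>\<^sup>2))"
    using assms by (simp add: field_simps power2_eq_square)
  then show ?thesis unfolding normal_density_def
    by (simp add: exp_add[symmetric] mult_ac)
qed

lemma nn_integral_normal_density: "\<sigma> > 0 \<Longrightarrow> (\<integral>\<^sup>+x. ennreal (normal_density \<mu> \<sigma> x) \<partial>lborel) = 1"
  by (subst nn_integral_eq_integral) (auto intro: integrable_normal_density)

lemma mgf_normal:
  assumes "\<sigma> > 0"
  shows "(\<integral>\<^sup>+x. ennreal (normal_density 0 \<sigma> x) * ennreal (exp (c * x)) \<partial>lborel) = ennreal (exp (c\<^sup>2 * \<sigma>\<^sup>2 / 2))"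
proof -
  have "(\<integral>\<^sup>+x. ennreal (normal_density 0 \<sigma> x) * ennreal (exp (c * x)) \<partial>lborel)
      = (\<integral>\<^sup>+x. ennreal (exp (c\<^sup>2 * \<sigma>\<^sup>2 / 2)) * ennreal (normal_density (c * \<sigma>\<^sup>2) \<sigma> x) \<partial>lborel)"
    by (intro nn_integral_cong) (simp add: ennreal_mult[symmetric] normal_density_exp[OF assms])
  also have "\<dots> = ennreal (exp (c\<^sup>2 * \<sigma>\<^sup>2 / 2))"
    using assms by (subst nn_integral_cmult) (auto simp: nn_integral_normal_density)
  finally show ?thesis .
qed

lemma mgf_increment:
  fixes B :: "real \<Rightarrow> 'a \<Rightarrow> real"
  assumes P: "prob_space M"
    and incr: "\<And>s u. 0 \<le> u \<Longrightarrow> u < s \<Longrightarrow>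
        distributed M lborel (\<lambda>\<omega>. B s \<omega> - B u \<omega>) (\<lambda>x. ennreal (normal_density 0 (sqrt (s - u)) x))"
    and "0 \<le> u" "u \<le> s"
  shows "(\<integral>\<^sup>+\<omega>. ennreal (exp (c * (B s \<omega> - B u \<omega>))) \<partial>M) = ennreal (exp (c\<^sup>2 * (s - u) / 2))"
proof (cases "u = s")
  case True
  then show ?thesis using prob_space.emeasure_space_1[OF P] by simp
next
  case False
  then have us: "u < s" using assms by simp
  have "(\<integral>\<^sup>+\<omega>. ennreal (exp (c * (B s \<omega> - B u \<omega>))) \<partial>M)
      = (\<integral>\<^sup>+x. ennreal (normal_density 0 (sqrt (s - u)) x) * ennreal (exp (c * x)) \<partial>lborel)"
    by (rule distributed_nn_integral[OF incr[OF \<open>0 \<le> u\<close> us], symmetric]) measurable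
  also have "\<dots> = ennreal (exp (c\<^sup>2 * (sqrt (s - u))\<^sup>2 / 2))"
    using us by (intro mgf_normal) simp
  also have "(sqrt (s - u))\<^sup>2 = s - u" using us by simp
  finally show ?thesis .
qed

lemma tonelli_key:
  fixes B :: "real \<Rightarrow> 'a \<Rightarrow> real" and k :: "real \<Rightarrow> real"
  assumes P: "prob_space M"
    and meas: "\<And>s. s \<ge> 0 \<Longrightarrow> B s \<in> borel_measurable M"
    and cont: "\<And>\<omega>. \<omega> \<in> space M \<Longrightarrow> continuous_on {0..} (\<lambda>s. B s \<omega>)"
    and incr: "\<And>s u. 0 \<le> u \<Longrightarrow> u < s \<Longrightarrow>
        distributed M lborel (\<lambda>\<omega>. B s \<omega> - B u \<omega>) (\<lambda>x. ennreal (normal_density 0 (sqrt (s - u)) x))"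
    and ab: "0 \<le> a" "a \<le> b"
    and kc: "continuous_on UNIV k" and kpos: "\<And>s. 0 \<le> k s"
  shows "(\<integral>\<^sup>+\<omega>. (\<integral>\<^sup>+s. ennreal (indicator {a..b} s * k s * exp (c * (B s \<omega> - B a \<omega>))) \<partial>lborel) \<partial>M)
       = ennreal (integral {a..b} (\<lambda>s. k s * exp (c\<^sup>2 * (s - a) / 2)))"
proof -
  interpret P: prob_space M by (rule P)
  interpret PS: pair_sigma_finite lborel M ..
  define f where "f s \<omega> = ennreal (indicator {a..b} s * k s * exp (c * (B (max 0 s) \<omega> - B a \<omega>)))" for s \<omega>
  have eq1: "(\<integral>\<^sup>+s. ennreal (indicator {a..b} s * k s * exp (c * (B s \<omega> - B a \<omega>))) \<partial>lborel)
     = (\<integral>\<^sup>+s. f s \<omega> \<partial>lborel)" for \<omega>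
    using ab by (intro nn_integral_cong) (auto simp: f_def indicator_def)
  have [measurable]: "B a \<in> borel_measurable M" using meas ab by simp
  have [measurable]: "k \<in> borel_measurable borel" using kc by (rule borel_measurable_continuous_onI)
  have jm[measurable]: "(\<lambda>p. B (max 0 (fst p)) (snd p)) \<in> borel_measurable (lborel \<Otimes>\<^sub>M M)"
    by (rule joint_meas_B[OF meas cont])
  have fm: "case_prod f \<in> borel_measurable (lborel \<Otimes>\<^sub>M M)"
    unfolding f_def split_beta' by measurable
  have "(\<integral>\<^sup>+\<omega>. (\<integral>\<^sup>+s. f s \<omega> \<partial>lborel) \<partial>M) = (\<integral>\<^sup>+s. (\<integral>\<^sup>+\<omega>. f s \<omega> \<partial>M) \<partial>lborel)"
    by (rule PS.Fubini'[OF fm])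
  also have "\<dots> = (\<integral>\<^sup>+s. ennreal (k s * exp (c\<^sup>2 * (s - a) / 2)) * indicator {a..b} s \<partial>lborel)"
  proof (intro nn_integral_cong)
    fix s :: real
    show "(\<integral>\<^sup>+\<omega>. f s \<omega> \<partial>M) = ennreal (k s * exp (c\<^sup>2 * (s - a) / 2)) * indicator {a..b} s"
    proof (cases "s \<in> {a..b}")
      case True
      have ms: "max 0 s = s" using True ab by auto
      have "(\<integral>\<^sup>+\<omega>. f s \<omega> \<partial>M) = (\<integral>\<^sup>+\<omega>. ennreal (k s) * ennreal (exp (c * (B s \<omega> - B a \<omega>))) \<partial>M)"
        using True kpos[of s] by (intro nn_integral_cong) (simp add: f_def ms ennreal_mult)
      also have "\<dots> = ennreal (k s) * (\<integral>\<^sup>+\<omega>. ennreal (exp (c * (B s \<omega> - B a \<omega>))) \<partial>M)"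
      proof (rule nn_integral_cmult)
        have [measurable]: "B s \<in> borel_measurable M" using meas True ab by simp
        show "(\<lambda>\<omega>. ennreal (exp (c * (B s \<omega> - B a \<omega>)))) \<in> borel_measurable M" by measurable
      qed
      also have "\<dots> = ennreal (k s) * ennreal (exp (c\<^sup>2 * (s - a) / 2))"
        using True ab by (subst mgf_increment[OF P incr]) auto
      finally show ?thesis using True kpos[of s] by (simp add: ennreal_mult)
    next
      case False
      then show ?thesis by (simp add: f_def)
    qed
  qed
  also have "\<dots> = ennreal (integral {a..b} (\<lambda>s. k s * exp (c\<^sup>2 * (s - a) / 2)))"
  proof (rule nn_integral_has_integral_lebesgue')
    show "0 \<le> k s * exp (c\<^sup>2 * (s - a) / 2)" for s using kpos[of s] by simp
    have "continuous_on {a..b} (\<lambda>s. k s * exp (c\<^sup>2 * (s - a) / 2))"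
      by (intro continuous_intros continuous_on_subset[OF kc]) auto
    then show "((\<lambda>s. k s * exp (c\<^sup>2 * (s - a) / 2)) has_integral
        integral {a..b} (\<lambda>s. k s * exp (c\<^sup>2 * (s - a) / 2))) {a..b}"
      by (intro integrable_integral integrable_continuous_interval)
  qed
  finally show ?thesis unfolding eq1 .
qed



lemma bochner_key:
  fixes B :: "real \<Rightarrow> 'a \<Rightarrow> real" and k :: "real \<Rightarrow> real"
  assumes P: "prob_space M"
    and meas: "\<And>s. s \<ge> 0 \<Longrightarrow> B s \<in> borel_measurable M"
    and cont: "\<And>\<omega>. \<omega> \<in> space M \<Longrightarrow> continuous_on {0..} (\<lambda>s. B s \<omega>)"
    and incr: "\<And>s u. 0 \<le> u \<Longrightarrow> u < s \<Longrightarrow>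
        distributed M lborel (\<lambda>\<omega>. B s \<omega> - B u \<omega>) (\<lambda>x. ennreal (normal_density 0 (sqrt (s - u)) x))"
    and ab: "0 \<le> a" "a \<le> b"
    and kc: "continuous_on UNIV k" and kpos: "\<And>s. 0 \<le> k s"
  shows "integrable M (\<lambda>\<omega>. (\<integral>s\<in>{a..b}. k s * exp (c * (B s \<omega> - B a \<omega>)) \<partial>lborel))
     \<and> (\<integral>\<omega>. (\<integral>s\<in>{a..b}. k s * exp (c * (B s \<omega> - B a \<omega>)) \<partial>lborel) \<partial>M)
       = integral {a..b} (\<lambda>s. k s * exp (c\<^sup>2 * (s - a) / 2))"
proof -
  interpret P: prob_space M by (rule P)
  define \<Phi> where "\<Phi> \<omega> = (\<integral>\<^sup>+s. ennreal (indicator {a..b} s * k s * exp (c * (B s \<omega> - B a \<omega>))) \<partial>lborel)" for \<omega>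
  have [measurable]: "B a \<in> borel_measurable M" using meas ab by simp
  have [measurable]: "k \<in> borel_measurable borel" using kc by (rule borel_measurable_continuous_onI)
  have jm[measurable]: "(\<lambda>p. B (max 0 (fst p)) (snd p)) \<in> borel_measurable (lborel \<Otimes>\<^sub>M M)"
    by (rule joint_meas_B[OF meas cont])
  have jm2: "(\<lambda>p. ennreal (indicator {a..b} (snd p) * k (snd p) * exp (c * (B (max 0 (snd p)) (fst p) - B a (fst p)))))
     \<in> borel_measurable (M \<Otimes>\<^sub>M lborel)"
  proof -
    have "(\<lambda>p. ennreal (indicator {a..b} (fst p) * k (fst p) * exp (c * (B (max 0 (fst p)) (snd p) - B a (snd p)))))
     \<in> borel_measurable (lborel \<Otimes>\<^sub>M M)" by measurable
    from measurable_compose[OF measurable_pair_swap' this] show ?thesis by (simp add: split_beta')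
  qed
  have \<Phi>m: "\<Phi> \<in> borel_measurable M"
  proof -
    have "(\<lambda>\<omega>. \<integral>\<^sup>+s. ennreal (indicator {a..b} s * k s * exp (c * (B (max 0 s) \<omega> - B a \<omega>))) \<partial>lborel) \<in> borel_measurable M"
      using sigma_finite_measure.borel_measurable_nn_integral_fst[OF sigma_finite_lborel jm2] by simp
    moreover have "(\<integral>\<^sup>+s. ennreal (indicator {a..b} s * k s * exp (c * (B (max 0 s) \<omega> - B a \<omega>))) \<partial>lborel) = \<Phi> \<omega>" for \<omega>
      unfolding \<Phi>_def using ab by (intro nn_integral_cong) (auto simp: indicator_def)
    ultimately show ?thesis by simp
  qed
  have pw: "(\<integral>s\<in>{a..b}. k s * exp (c * (B s \<omega> - B a \<omega>)) \<partial>lborel) = enn2real (\<Phi> \<omega>)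
     \<and> \<Phi> \<omega> = ennreal (\<integral>s\<in>{a..b}. k s * exp (c * (B s \<omega> - B a \<omega>)) \<partial>lborel)
     \<and> 0 \<le> (\<integral>s\<in>{a..b}. k s * exp (c * (B s \<omega> - B a \<omega>)) \<partial>lborel)"
    if \<omega>: "\<omega> \<in> space M" for \<omega>
  proof -
    have cc: "continuous_on {a..b} (\<lambda>s. k s * exp (c * (B s \<omega> - B a \<omega>)))"
      using ab by (intro continuous_intros continuous_on_subset[OF kc] continuous_on_subset[OF cont[OF \<omega>]]) auto
    have e1: "(\<integral>s\<in>{a..b}. k s * exp (c * (B s \<omega> - B a \<omega>)) \<partial>lborel) = integral {a..b} (\<lambda>s. k s * exp (c * (B s \<omega> - B a \<omega>)))"
      by (rule set_borel_integral_eq_integral(2)[OF borel_integrable_atLeastAtMost'[OF cc]])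
    have e2: "\<Phi> \<omega> = ennreal (integral {a..b} (\<lambda>s. k s * exp (c * (B s \<omega> - B a \<omega>))))"
    proof -
      have "\<Phi> \<omega> = (\<integral>\<^sup>+s. ennreal (k s * exp (c * (B s \<omega> - B a \<omega>))) * indicator {a..b} s \<partial>lborel)"
        unfolding \<Phi>_def by (intro nn_integral_cong) (auto simp: indicator_def)
      also have "\<dots> = ennreal (integral {a..b} (\<lambda>s. k s * exp (c * (B s \<omega> - B a \<omega>))))"
        by (rule nn_integral_has_integral_lebesgue') (auto intro: kpos integrable_integral integrable_continuous_interval[OF cc] mult_nonneg_nonneg)
      finally show ?thesis .
    qed
    have "0 \<le> integral {a..b} (\<lambda>s. k s * exp (c * (B s \<omega> - B a \<omega>)))"
      by (intro integral_nonneg integrable_continuous_interval[OF cc]) (auto intro: kpos mult_nonneg_nonneg)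
    then show ?thesis using e1 e2 by simp
  qed
  have pw1: "(\<integral>s\<in>{a..b}. k s * exp (c * (B s \<omega> - B a \<omega>)) \<partial>lborel) = enn2real (\<Phi> \<omega>)"
    and pw2: "\<Phi> \<omega> = ennreal (\<integral>s\<in>{a..b}. k s * exp (c * (B s \<omega> - B a \<omega>)) \<partial>lborel)"
    and pw3: "0 \<le> (\<integral>s\<in>{a..b}. k s * exp (c * (B s \<omega> - B a \<omega>)) \<partial>lborel)"
    if "\<omega> \<in> space M" for \<omega> using pw[OF that] by blast+
  have nnI: "(\<integral>\<^sup>+\<omega>. \<Phi> \<omega> \<partial>M) = ennreal (integral {a..b} (\<lambda>s. k s * exp (c\<^sup>2 * (s - a) / 2)))"
    unfolding \<Phi>_def by (rule tonelli_key[OF P meas cont incr ab kc kpos])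
  have intg: "integrable M (\<lambda>\<omega>. (\<integral>s\<in>{a..b}. k s * exp (c * (B s \<omega> - B a \<omega>)) \<partial>lborel))"
  proof (rule integrableI_nonneg)
    have "(\<lambda>\<omega>. enn2real (\<Phi> \<omega>)) \<in> borel_measurable M" using \<Phi>m by measurable
    then show "(\<lambda>\<omega>. (\<integral>s\<in>{a..b}. k s * exp (c * (B s \<omega> - B a \<omega>)) \<partial>lborel)) \<in> borel_measurable M"
      by (rule measurable_cong[THEN iffD1, rotated]) (rule pw1[symmetric])
    show "AE \<omega> in M. 0 \<le> (\<integral>s\<in>{a..b}. k s * exp (c * (B s \<omega> - B a \<omega>)) \<partial>lborel)"
      by (intro AE_I2 pw3)
    have "(\<integral>\<^sup>+\<omega>. ennreal (\<integral>s\<in>{a..b}. k s * exp (c * (B s \<omega> - B a \<omega>)) \<partial>lborel) \<partial>M) = (\<integral>\<^sup>+\<omega>. \<Phi> \<omega> \<partial>M)"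
      by (intro nn_integral_cong) (rule pw2[symmetric])
    then show "(\<integral>\<^sup>+\<omega>. ennreal (\<integral>s\<in>{a..b}. k s * exp (c * (B s \<omega> - B a \<omega>)) \<partial>lborel) \<partial>M) < \<infinity>"
      using nnI by simp
  qed
  have "(\<integral>\<omega>. (\<integral>s\<in>{a..b}. k s * exp (c * (B s \<omega> - B a \<omega>)) \<partial>lborel) \<partial>M) = (\<integral>\<omega>. enn2real (\<Phi> \<omega>) \<partial>M)"
    by (intro Bochner_Integration.integral_cong refl) (use pw in blast)
  also have "\<dots> = enn2real (\<integral>\<^sup>+\<omega>. ennreal (enn2real (\<Phi> \<omega>)) \<partial>M)"
    by (rule integral_eq_nn_integral) (use \<Phi>m in auto)
  also have "(\<integral>\<^sup>+\<omega>. ennreal (enn2real (\<Phi> \<omega>)) \<partial>M) = (\<integral>\<^sup>+\<omega>. \<Phi> \<omega> \<partial>M)"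
  proof (intro nn_integral_cong)
    fix \<omega> assume "\<omega> \<in> space M"
    from pw[OF this] obtain v where "\<Phi> \<omega> = ennreal v" "0 \<le> v" by blast
    then show "ennreal (enn2real (\<Phi> \<omega>)) = \<Phi> \<omega>" by simp
  qed
  also have "\<dots> = ennreal (integral {a..b} (\<lambda>s. k s * exp (c\<^sup>2 * (s - a) / 2)))"
    unfolding \<Phi>_def by (rule tonelli_key[OF P meas cont incr ab kc kpos])
  also have "enn2real \<dots> = integral {a..b} (\<lambda>s. k s * exp (c\<^sup>2 * (s - a) / 2))"
  proof -
    have "continuous_on {a..b} (\<lambda>s. k s * exp (c\<^sup>2 * (s - a) / 2))"
      by (intro continuous_intros continuous_on_subset[OF kc]) auto
    then have "0 \<le> integral {a..b} (\<lambda>s. k s * exp (c\<^sup>2 * (s - a) / 2))"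
      by (intro integral_nonneg integrable_continuous_interval) (auto intro: kpos mult_nonneg_nonneg)
    then show ?thesis by simp
  qed
  finally show ?thesis using intg by blast
qed



lemma indef_integral_rescale:
  fixes g :: "real \<Rightarrow> real"
  assumes "a \<le> s" "continuous_on {a..s} g"
  shows "integral {a..s} g = integral {0..1} (\<lambda>v. (s - a) * g (a + v * (s - a)))"
proof -
  have "((\<lambda>v. (s - a) *\<^sub>R g (a + v * (s - a))) has_integral (integral {a + 0 * (s - a)..a + 1 * (s - a)} g)) {0..1}"
  proof (rule has_integral_substitution[where c=a and d=s])
    show "a + 0 * (s - a) \<le> a + 1 * (s - a)" using assms by simp
    show "(\<lambda>v. a + v * (s - a)) ` {0..1} \<subseteq> {a..s}"
    proof
      fix y assume "y \<in> (\<lambda>v. a + v * (s - a)) ` {0..1}"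
      then obtain v where v: "0 \<le> v" "v \<le> 1" "y = a + v * (s - a)" by auto
      have "v * (s - a) \<le> 1 * (s - a)" using v assms by (intro mult_right_mono) auto
      moreover have "0 \<le> v * (s - a)" using v assms by simp
      ultimately show "y \<in> {a..s}" using v by auto
    qed
    show "((\<lambda>v. a + v * (s - a)) has_field_derivative (s - a)) (at v within {0..1})" for v
      by (auto intro!: derivative_eq_intros)
  qed (use assms in auto)
  then have "integral {0..1} (\<lambda>v. (s - a) *\<^sub>R g (a + v * (s - a))) = integral {a + 0 * (s - a)..a + 1 * (s - a)} g"
    by (rule integral_unique)
  then show ?thesis by simp
qed

lemma conv_in_interval:
  fixes a b s v :: real
  assumes "a \<le> s" "s \<le> b" "0 \<le> v" "v \<le> 1"
  shows "a \<le> a + v * (s - a)" "a + v * (s - a) \<le> b"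
proof -
  have "v * (s - a) \<le> 1 * (s - a)" using assms by (intro mult_right_mono) auto
  moreover have "0 \<le> v * (s - a)" using assms by simp
  ultimately show "a \<le> a + v * (s - a)" "a + v * (s - a) \<le> b" using assms by auto
qed

lemma cont_param_indef:
  fixes g :: "'a::topological_space \<Rightarrow> real \<Rightarrow> real"
  assumes gc: "continuous_on (U \<times> {a..b}) (\<lambda>(x, u). g x u)"
  shows "continuous_on (U \<times> {a..b}) (\<lambda>(x, s). integral {a..s} (g x))"
proof -
  have c1: "continuous_on ((U \<times> {a..b}) \<times> cbox 0 1) (\<lambda>(xs, v). (snd xs - a) * g (fst xs) (a + v * (snd xs - a)))"
  proof -
    have m: "(\<lambda>(xs, v). (fst xs, a + v * (snd xs - a))) ` ((U \<times> {a..b}) \<times> cbox 0 1) \<subseteq> U \<times> {a..b}"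
      using conv_in_interval by (fastforce simp: cbox_interval)
    have "continuous_on ((U \<times> {a..b}) \<times> cbox 0 1) (\<lambda>p. (\<lambda>(x, u). g x u) ((\<lambda>(xs, v). (fst xs, a + v * (snd xs - a))) p))"
    proof (rule continuous_on_compose2[OF gc _ m])
      show "continuous_on ((U \<times> {a..b}) \<times> cbox 0 1) (\<lambda>(xs, v). (fst xs, a + v * (snd xs - a)))"
        by (auto intro!: continuous_intros simp: split_beta)
    qed
    then have "continuous_on ((U \<times> {a..b}) \<times> cbox 0 1) (\<lambda>(xs, v). g (fst xs) (a + v * (snd xs - a)))"
      by (simp add: o_def split_beta)
    then show ?thesis
      by (auto intro!: continuous_intros simp: split_beta)
  qed
  have "continuous_on (U \<times> {a..b}) (\<lambda>xs. integral (cbox 0 1) (\<lambda>v. (snd xs - a) * g (fst xs) (a + v * (snd xs - a))))"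
    by (rule integral_continuous_on_param[where f="\<lambda>xs v. (snd xs - a) * g (fst xs) (a + v * (snd xs - a))"]) (use c1 in simp)
  then show ?thesis
  proof (rule continuous_on_eq)
    fix xs assume xs: "xs \<in> U \<times> {a..b}"
    have "continuous_on {a..snd xs} (g (fst xs))"
    proof -
      have "continuous_on ({fst xs} \<times> {a..snd xs}) (\<lambda>(x, u). g x u)"
        by (rule continuous_on_subset[OF gc]) (use xs in auto)
      then have "continuous_on {a..snd xs} ((\<lambda>(x, u). g x u) \<circ> (\<lambda>u. (fst xs, u)))"
        by (intro continuous_on_compose) (auto intro!: continuous_intros elim: continuous_on_subset)
      then show ?thesis by (simp add: o_def)
    qed
    then show "integral (cbox 0 1) (\<lambda>v. (snd xs - a) * g (fst xs) (a + v * (snd xs - a))) = (case xs of (x, s) \<Rightarrow> integral {a..s} (g x))"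
      using xs indef_integral_rescale[of a "snd xs" "g (fst xs)"] by (auto simp: split_beta)
  qed
qed



lemma H2_cont[continuous_intros]:
  "continuous_on S f \<Longrightarrow> continuous_on S g \<Longrightarrow> continuous_on S (\<lambda>p. H2 \<delta> fI a (f p) (g p))"
  unfolding H2_def by (intro continuous_intros)


context
  fixes \<delta> fI a m0 m1 \<kappa> :: real
  assumes \<delta>pos: "\<delta> > 0" and fIpos: "fI > 0" and m1nn: "m1 \<ge> 0" and \<kappa>pos: "\<kappa> > 0"
begin

lemma H2_pos: assumes "x > 0" "a \<le> u" shows "H2 \<delta> fI a x u > 0"
proof -
  have "exp (- \<delta> * (u - a)) \<le> 1" using assms \<delta>pos by simp
  then have "0 \<le> fI / \<delta> * (1 - exp (- \<delta> * (u - a)))" using fIpos \<delta>pos by simp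
  moreover have "0 < x * exp (- \<delta> * (u - a))" using assms by simp
  ultimately show ?thesis unfolding H2_def by linarith
qed

definition gM where "gM x u = MH m0 m1 \<kappa> (H2 \<delta> fI a x u)"
definition gMx where "gMx x u = m1 * (- \<kappa>) * (H2 \<delta> fI a x u) powr (- \<kappa> - 1) * exp (- \<delta> * (u - a))"
definition G where "G x s = integral {a..s} (gM x)"
definition Gx where "Gx x s = integral {a..s} (gMx x)"

lemma H2_deriv: "((\<lambda>x. H2 \<delta> fI a x u) has_field_derivative exp (- \<delta> * (u - a))) (at x within X)"
  unfolding H2_def by (auto intro!: derivative_eq_intros)

lemma gM_deriv: assumes "x > 0" "a \<le> u"
  shows "((\<lambda>x. gM x u) has_field_derivative gMx x u) (at x within X)"
proof -
  have hp: "H2 \<delta> fI a x u > 0" using H2_pos assms by simp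
  have d2: "((\<lambda>x. (H2 \<delta> fI a x u) powr (- \<kappa>)) has_field_derivative
      ((- \<kappa>) * (H2 \<delta> fI a x u) powr (- \<kappa> - 1)) * exp (- \<delta> * (u - a))) (at x within X)"
    using DERIV_chain2[OF has_real_derivative_powr[OF hp, of "- \<kappa>"] H2_deriv] by simp
  have "((\<lambda>x. m0 + m1 * (H2 \<delta> fI a x u) powr (- \<kappa>)) has_field_derivative
      0 + m1 * (((- \<kappa>) * (H2 \<delta> fI a x u) powr (- \<kappa> - 1)) * exp (- \<delta> * (u - a)))) (at x within X)"
    by (rule DERIV_add[OF DERIV_const DERIV_cmult[OF d2]])
  then show ?thesis unfolding gM_def gMx_def MH_def by (simp add: mult_ac)
qed

lemma gM_cont: "continuous_on ({0<..} \<times> {a..b}) (\<lambda>(x, u). gM x u)"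
  unfolding gM_def MH_def split_beta
  by (intro continuous_intros) (auto dest!: H2_pos[rotated] simp: less_imp_neq[symmetric])

lemma gMx_cont: "continuous_on ({0<..} \<times> {a..b}) (\<lambda>(x, u). gMx x u)"
  unfolding gMx_def split_beta
  by (intro continuous_intros) (auto dest!: H2_pos[rotated] simp: less_imp_neq[symmetric])

lemma gM_cont1: "x > 0 \<Longrightarrow> continuous_on {a..b} (gM x)"
  unfolding gM_def MH_def
  by (intro continuous_intros) (auto dest!: H2_pos[rotated] simp: less_imp_neq[symmetric])

lemma gMx_cont1: "x > 0 \<Longrightarrow> continuous_on {a..b} (gMx x)"
  unfolding gMx_def
  by (intro continuous_intros) (auto dest!: H2_pos[rotated] simp: less_imp_neq[symmetric])

lemma G_deriv: assumes "x > 0" "a \<le> s"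
  shows "((\<lambda>x. G x s) has_field_derivative Gx x s) (at x)"
proof -
  have "((\<lambda>x. integral (cbox a s) (gM x)) has_field_derivative integral (cbox a s) (gMx x)) (at x within {0<..})"
  proof (rule leibniz_rule_field_derivative)
    show "((\<lambda>x. gM x u) has_field_derivative gMx x u) (at x within {0<..})" if "x \<in> {0<..}" "u \<in> cbox a s" for x u
      using that by (intro gM_deriv) auto
    show "gM x integrable_on cbox a s" if "x \<in> {0<..}" for x
      using that gM_cont1[of x s] by (auto intro: integrable_continuous_interval)
    show "continuous_on ({0<..} \<times> cbox a s) (\<lambda>(x, u). gMx x u)"
      using gMx_cont[of s] by simp
  qed (use assms in auto)
  then show ?thesis using assms unfolding G_def Gx_def
    by (simp add: at_within_open[of x "{0<..}"])
qed

lemma G_cont: "continuous_on ({0<..} \<times> {a..b}) (\<lambda>(x, s). G x s)"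
  unfolding G_def by (rule cont_param_indef[OF gM_cont])

lemma Gx_cont: "continuous_on ({0<..} \<times> {a..b}) (\<lambda>(x, s). Gx x s)"
  unfolding Gx_def by (rule cont_param_indef[OF gMx_cont])

lemma Gx_nonpos: assumes "x > 0" shows "Gx x s \<le> 0"
proof (cases "a \<le> s")
  case True
  have "integral {a..s} (gMx x) \<le> integral {a..s} (\<lambda>_. 0::real)"
  proof (rule integral_le)
    show "gMx x integrable_on {a..s}" using gMx_cont1[OF assms] by (rule integrable_continuous_interval)
    show "gMx x u \<le> 0" if "u \<in> {a..s}" for u
      using m1nn \<kappa>pos unfolding gMx_def by (simp add: mult_nonneg_nonneg mult_le_0_iff)
  qed auto
  then show ?thesis unfolding Gx_def by simp
next
  case False
  then show ?thesis unfolding Gx_def by simp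
qed

lemma LINT_shift: assumes "x > 0" "a \<le> s"
  shows "(\<integral>u\<in>{a..s}. (c + MH m0 m1 \<kappa> (H2 \<delta> fI a x u)) \<partial>lborel) = c * (s - a) + G x s"
proof -
  have cc: "continuous_on {a..s} (\<lambda>u. c + gM x u)" using gM_cont1[OF assms(1)] by (intro continuous_intros)
  have "(\<integral>u\<in>{a..s}. (c + MH m0 m1 \<kappa> (H2 \<delta> fI a x u)) \<partial>lborel) = integral {a..s} (\<lambda>u. c + gM x u)"
    using set_borel_integral_eq_integral(2)[OF borel_integrable_atLeastAtMost'[OF cc]] by (simp add: gM_def)
  also have "\<dots> = integral {a..s} (\<lambda>u. c) + integral {a..s} (gM x)"
    by (rule integral_add) (auto intro: integrable_continuous_interval gM_cont1[OF assms(1)])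
  also have "\<dots> = c * (s - a) + G x s" using assms by (simp add: G_def mult.commute)
  finally show ?thesis .
qed

end


lemma alg_integrand:
  fixes y \<alpha> p P Q \<theta> D w H :: real
  assumes "y > 0" "\<alpha> > 0"
  shows "exp (- P) * ((1 - \<alpha>) * ((y * exp (Q - \<theta> * D - \<theta>\<^sup>2 / 2 * w)) / \<alpha>) powr p * H)
       = (1 - \<alpha>) * (y / \<alpha>) powr p * exp (- P + p * (Q - \<theta>\<^sup>2 / 2 * w)) * H * exp ((- p * \<theta>) * D)"
proof -
  define X where "X = Q - \<theta> * D - \<theta>\<^sup>2 / 2 * w"
  have "(y * exp X) / \<alpha> = (y / \<alpha>) * exp X" by simp
  moreover have "((y / \<alpha>) * exp X) powr p = (y / \<alpha>) powr p * exp X powr p"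
    using assms by (subst powr_mult) auto
  moreover have "exp X powr p = exp (p * X)" by (simp add: powr_def)
  ultimately have "((y * exp (Q - \<theta> * D - \<theta>\<^sup>2 / 2 * w)) / \<alpha>) powr p = (y / \<alpha>) powr p * exp (p * (Q - \<theta> * D - \<theta>\<^sup>2 / 2 * w))"
    unfolding X_def by simp
  moreover have "exp (- P) * exp (p * (Q - \<theta> * D - \<theta>\<^sup>2 / 2 * w)) = exp (- P + p * (Q - \<theta>\<^sup>2 / 2 * w)) * exp ((- p * \<theta>) * D)"
    by (simp add: exp_add[symmetric] algebra_simps)
  ultimately show ?thesis by (simp add: mult_ac)
qed

context
  fixes \<delta> fI a m0 m1 \<kappa> :: real
  assumes \<delta>pos: "\<delta> > 0" and fIpos: "fI > 0" and m1nn: "m1 \<ge> 0" and \<kappa>pos: "\<kappa> > 0"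
begin

context
  fixes T \<theta> r \<rho> \<alpha> y :: real
  assumes \<alpha>pos: "0 < \<alpha>" and \<alpha>lt: "\<alpha> < 1" and ypos: "y > 0" and a0: "0 \<le> a" and aT: "a \<le> T"
begin

definition pp where "pp = \<alpha> / (\<alpha> - 1)"
definition Cc where "Cc = (1 - \<alpha>) * (y / \<alpha>) powr pp"
definition EE where "EE x s = - (\<rho> * (s - a) + G \<delta> fI a m0 m1 \<kappa> x s)
   + pp * ((\<rho> - r) * (s - a) + G \<delta> fI a m0 m1 \<kappa> x s - \<theta>\<^sup>2 / 2 * (s - a))"
definition K0 where "K0 x s = Cc * exp (EE x s) * H2 \<delta> fI a x s"
definition Kf where "Kf x s = K0 x s * exp ((- pp * \<theta>)\<^sup>2 * (s - a) / 2)"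
definition Kfx where "Kfx x s = Cc * exp (EE x s) * ((pp - 1) * Gx \<delta> fI a m1 \<kappa> x s * H2 \<delta> fI a x s
   + exp (- \<delta> * (s - a))) * exp ((- pp * \<theta>)\<^sup>2 * (s - a) / 2)"

lemma Cc_pos: "Cc > 0" unfolding Cc_def using \<alpha>pos \<alpha>lt ypos by simp

lemma pp_neg: "pp - 1 < 0" unfolding pp_def using \<alpha>pos \<alpha>lt by (simp add: divide_less_eq)

lemma integrand_eq:
  assumes "x > 0" "a \<le> s"
  shows "exp (- (\<integral>u\<in>{a..s}. (\<rho> + MH m0 m1 \<kappa> (H2 \<delta> fI a x u)) \<partial>lborel))
        * uhat \<alpha> (Z2 B \<theta> r \<rho> m0 m1 \<kappa> \<delta> fI a y x s \<omega>) (H2 \<delta> fI a x s)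
       = K0 x s * exp ((- pp * \<theta>) * (B s \<omega> - B a \<omega>))"
proof -
  note L1 = LINT_shift[OF \<delta>pos fIpos m1nn \<kappa>pos assms, of \<rho>]
  note L2 = LINT_shift[OF \<delta>pos fIpos m1nn \<kappa>pos assms, of "\<rho> - r"]
  show ?thesis
    unfolding Z2_def uhat_def L1 L2 K0_def EE_def Cc_def pp_def[symmetric]
    using alg_integrand[where P="\<rho> * (s - a) + G \<delta> fI a m0 m1 \<kappa> x s" and p=pp
        and Q="(\<rho> - r) * (s - a) + G \<delta> fI a m0 m1 \<kappa> x s" and \<theta>=\<theta> and D="B s \<omega> - B a \<omega>" and w="s - a" and H="H2 \<delta> fI a x s", OF ypos \<alpha>pos]
    by (simp add: pp_def)
qed

lemma G_cont1: assumes "x > 0" shows "continuous_on {a..b} (G \<delta> fI a m0 m1 \<kappa> x)"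
proof -
  have "continuous_on {a..b} (\<lambda>s. (\<lambda>(x, s). G \<delta> fI a m0 m1 \<kappa> x s) ((\<lambda>s. (x, s)) s))"
    by (rule continuous_on_compose2[OF G_cont[OF \<delta>pos fIpos m1nn \<kappa>pos]]) (use assms in \<open>auto intro!: continuous_intros\<close>)
  then show ?thesis by simp
qed

lemma K0_cont: "x > 0 \<Longrightarrow> continuous_on {a..T} (K0 x)"
  unfolding K0_def EE_def by (intro continuous_intros G_cont1 H2_cont)

lemma K0_pos: "x > 0 \<Longrightarrow> a \<le> s \<Longrightarrow> K0 x s > 0"
  unfolding K0_def using Cc_pos H2_pos[OF \<delta>pos fIpos m1nn \<kappa>pos] by (simp add: mult_pos_pos)

lemma Kfx_cont: "continuous_on ({0<..} \<times> {a..T}) (\<lambda>(x, s). Kfx x s)"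
proof -
  note c1 = G_cont[OF \<delta>pos fIpos m1nn \<kappa>pos, where b=T, unfolded split_beta']
  note c2 = Gx_cont[OF \<delta>pos fIpos m1nn \<kappa>pos, where b=T, unfolded split_beta']
  let ?S = "{0<..} \<times> {a..T}"
  have cE: "continuous_on ?S (\<lambda>p. EE (fst p) (snd p))"
    unfolding EE_def by (intro continuous_on_add continuous_on_minus continuous_on_mult continuous_on_diff continuous_on_const c1 continuous_on_snd continuous_on_id)
  have cH: "continuous_on ?S (\<lambda>p. H2 \<delta> fI a (fst p) (snd p))"
    by (intro H2_cont continuous_on_fst continuous_on_snd continuous_on_id)
  have "continuous_on ?S (\<lambda>p. Cc * exp (EE (fst p) (snd p)) * ((pp - 1) * Gx \<delta> fI a m1 \<kappa> (fst p) (snd p) * H2 \<delta> fI a (fst p) (snd p)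
   + exp (- \<delta> * (snd p - a))) * exp ((- pp * \<theta>)\<^sup>2 * (snd p - a) / 2))"
    by (intro continuous_on_add continuous_on_minus continuous_on_mult continuous_on_diff continuous_on_const c2 cE cH
       continuous_on_exp continuous_on_snd continuous_on_id continuous_on_divide continuous_on_power) auto
  then show ?thesis unfolding Kfx_def split_beta' .
qed

lemma Kf_deriv: assumes "x > 0" "a \<le> s"
  shows "((\<lambda>x. Kf x s) has_field_derivative Kfx x s) (at x within X)"
proof -
  note d1 = has_field_derivative_at_within[OF G_deriv[OF \<delta>pos fIpos m1nn \<kappa>pos assms]]
  note d2 = H2_deriv[OF \<delta>pos fIpos m1nn \<kappa>pos, where a=a and u=s]
  have dE: "((\<lambda>x. EE x s) has_field_derivative (pp - 1) * Gx \<delta> fI a m1 \<kappa> x s) (at x within X)"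
    unfolding EE_def
    by (rule DERIV_cong, (rule derivative_eq_intros d1 refl)+) (simp add: algebra_simps)
  note e1 = DERIV_chain2[OF DERIV_exp dE]
  note e2 = DERIV_cmult[OF e1, of Cc]
  note e3 = DERIV_mult[OF e2 d2]
  note e4 = DERIV_cmult_right[OF e3, of "exp ((- pp * \<theta>)\<^sup>2 * (s - a) / 2)"]
  show ?thesis unfolding Kf_def Kfx_def K0_def
    by (rule DERIV_cong[OF e4]) (simp add: algebra_simps)

qed


lemma Wfun_eq:
  fixes M :: "'b measure" and B :: "real \<Rightarrow> 'b \<Rightarrow> real"
  assumes P: "prob_space M"
    and meas: "\<And>s. s \<ge> 0 \<Longrightarrow> B s \<in> borel_measurable M"
    and cont: "\<And>\<omega>. \<omega> \<in> space M \<Longrightarrow> continuous_on {0..} (\<lambda>s. B s \<omega>)"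
    and incr: "\<And>s u. 0 \<le> u \<Longrightarrow> u < s \<Longrightarrow>
        distributed M lborel (\<lambda>\<omega>. B s \<omega> - B u \<omega>) (\<lambda>x. ennreal (normal_density 0 (sqrt (s - u)) x))"
    and x: "x > 0"
  shows "Wfun M B T \<theta> r \<rho> m0 m1 \<kappa> \<delta> \<alpha> fI a y x = integral {a..T} (Kf x)"
proof -
  define k where "k s = K0 x (max a (min T s))" for s
  have kc: "continuous_on UNIV k"
  proof -
    have "continuous_on UNIV (\<lambda>s. K0 x ((\<lambda>s. max a (min T s)) s))"
      by (rule continuous_on_compose2[OF K0_cont[OF x]]) (use aT in \<open>auto intro!: continuous_intros\<close>)
    then show ?thesis by (simp add: k_def)
  qed
  have kpos: "0 \<le> k s" for s
    unfolding k_def using K0_pos[OF x, of "max a (min T s)"] by simp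
  have kK: "k s = K0 x s" if "s \<in> {a..T}" for s
    using that by (simp add: k_def)
  have "Wfun M B T \<theta> r \<rho> m0 m1 \<kappa> \<delta> \<alpha> fI a y x
      = (\<integral>\<omega>. (\<integral>s\<in>{a..T}. k s * exp ((- pp * \<theta>) * (B s \<omega> - B a \<omega>)) \<partial>lborel) \<partial>M)"
    unfolding Wfun_def
  proof (intro Bochner_Integration.integral_cong refl set_lebesgue_integral_cong allI impI)
    fix \<omega> s assume "s \<in> {a..T}"
    then show "exp (- (\<integral>u\<in>{a..s}. (\<rho> + MH m0 m1 \<kappa> (H2 \<delta> fI a x u)) \<partial>lborel))
        * uhat \<alpha> (Z2 B \<theta> r \<rho> m0 m1 \<kappa> \<delta> fI a y x s \<omega>) (H2 \<delta> fI a x s)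
       = k s * exp ((- pp * \<theta>) * (B s \<omega> - B a \<omega>))"
      using integrand_eq[OF x, of s B \<omega>] kK by simp
  qed simp
  also have "\<dots> = integral {a..T} (\<lambda>s. k s * exp ((- pp * \<theta>)\<^sup>2 * (s - a) / 2))"
    using bochner_key[OF P meas cont incr a0 aT kc kpos] by blast
  also have "\<dots> = integral {a..T} (Kf x)"
    by (intro integral_cong) (simp add: kK Kf_def)
  finally show ?thesis .
qed

lemma Kfx_nonneg: assumes "x > 0" "a \<le> s" shows "0 \<le> Kfx x s"
proof -
  have "0 \<le> (pp - 1) * Gx \<delta> fI a m1 \<kappa> x s"
    using pp_neg Gx_nonpos[OF \<delta>pos fIpos m1nn \<kappa>pos assms(1), where a=a and s=s] by (simp add: mult_nonpos_nonpos)
  then have "0 \<le> (pp - 1) * Gx \<delta> fI a m1 \<kappa> x s * H2 \<delta> fI a x s"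
    using H2_pos[OF \<delta>pos fIpos m1nn \<kappa>pos assms] by simp
  then have "0 \<le> (pp - 1) * Gx \<delta> fI a m1 \<kappa> x s * H2 \<delta> fI a x s + exp (- \<delta> * (s - a))"
    by (simp add: add_nonneg_pos)
  then show ?thesis unfolding Kfx_def using Cc_pos by simp
qed

lemma Wfun_deriv:
  fixes M :: "'b measure" and B :: "real \<Rightarrow> 'b \<Rightarrow> real"
  assumes P: "prob_space M"
    and meas: "\<And>s. s \<ge> 0 \<Longrightarrow> B s \<in> borel_measurable M"
    and cont: "\<And>\<omega>. \<omega> \<in> space M \<Longrightarrow> continuous_on {0..} (\<lambda>s. B s \<omega>)"
    and incr: "\<And>s u. 0 \<le> u \<Longrightarrow> u < s \<Longrightarrow>
        distributed M lborel (\<lambda>\<omega>. B s \<omega> - B u \<omega>) (\<lambda>x. ennreal (normal_density 0 (sqrt (s - u)) x))"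
    and x1: "x1 > 0"
  shows "0 \<le> deriv (\<lambda>x. Wfun M B T \<theta> r \<rho> m0 m1 \<kappa> \<delta> \<alpha> fI a y x) x1"
proof -
  have "((\<lambda>x. integral (cbox a T) (Kf x)) has_field_derivative integral (cbox a T) (Kfx x1)) (at x1 within {0<..})"
  proof (rule leibniz_rule_field_derivative)
    show "((\<lambda>x. Kf x s) has_field_derivative Kfx x s) (at x within {0<..})" if "x \<in> {0<..}" "s \<in> cbox a T" for x s
      using that by (intro Kf_deriv) auto
    show "Kf x integrable_on cbox a T" if "x \<in> {0<..}" for x
    proof -
      have "continuous_on {a..T} (Kf x)" unfolding Kf_def using that
        by (intro continuous_intros K0_cont) auto
      then show ?thesis by (simp add: integrable_continuous_interval)
    qed
    show "continuous_on ({0<..} \<times> cbox a T) (\<lambda>(x, s). Kfx x s)" using Kfx_cont by simp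
  qed (use x1 in auto)
  then have d: "((\<lambda>x. integral {a..T} (Kf x)) has_field_derivative integral {a..T} (Kfx x1)) (at x1)"
    using x1 by (simp add: at_within_open[of x1 "{0<..}"])
  have d2: "((\<lambda>x. Wfun M B T \<theta> r \<rho> m0 m1 \<kappa> \<delta> \<alpha> fI a y x) has_field_derivative integral {a..T} (Kfx x1)) (at x1)"
    by (rule has_field_derivative_transform_within_open[OF d, of "{0<..}"])
       (use x1 Wfun_eq[OF P meas cont incr] in auto)
  have "0 \<le> integral {a..T} (Kfx x1)"
  proof (rule integral_nonneg)
    have "continuous_on {a..T} (\<lambda>s. (\<lambda>(x, s). Kfx x s) ((\<lambda>s. (x1, s)) s))"
      by (rule continuous_on_compose2[OF Kfx_cont]) (use x1 in \<open>auto intro!: continuous_intros\<close>)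
    then show "Kfx x1 integrable_on {a..T}" by (simp add: integrable_continuous_interval)
    show "\<And>s. s \<in> {a..T} \<Longrightarrow> 0 \<le> Kfx x1 s" using Kfx_nonneg[OF x1] by auto
  qed
  then show ?thesis using DERIV_imp_deriv[OF d2] by simp
qed

end
end


lemma set_int_le:
  fixes A D :: "real \<Rightarrow> real"
  assumes Ac: "continuous_on {0..b} A" and Apos: "\<And>s. s \<in> {0..b} \<Longrightarrow> 0 \<le> A s"
    and Dpos: "\<And>s. s \<in> {0..\<tau>} \<Longrightarrow> 0 \<le> D s" and "0 \<le> \<tau>" "\<tau> \<le> b"
  shows "(\<integral>s\<in>{0..\<tau>}. (A s - D s) \<partial>lborel) \<le> integral {0..b} A"
proof -
  have Ac': "continuous_on {0..\<tau>} A" by (rule continuous_on_subset[OF Ac]) (use assms in auto)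
  have iA: "set_integrable lborel {0..\<tau>} A" by (rule borel_integrable_atLeastAtMost'[OF Ac'])
  have eA: "(\<integral>s\<in>{0..\<tau>}. A s \<partial>lborel) = integral {0..\<tau>} A"
    by (rule set_borel_integral_eq_integral(2)[OF iA])
  have nA: "0 \<le> integral {0..\<tau>} A"
    by (rule integral_nonneg) (use integrable_continuous_interval[OF Ac'] Apos assms in auto)
  have "(\<integral>s\<in>{0..\<tau>}. (A s - D s) \<partial>lborel) \<le> (\<integral>s\<in>{0..\<tau>}. A s \<partial>lborel)"
  proof (cases "set_integrable lborel {0..\<tau>} (\<lambda>s. A s - D s)")
    case True
    then show ?thesis by (rule set_integral_mono[OF _ iA]) (use Dpos in auto)
  next
    case False
    then have "(\<integral>s\<in>{0..\<tau>}. (A s - D s) \<partial>lborel) = 0"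
      unfolding set_lebesgue_integral_def set_integrable_def by (rule not_integrable_integral_eq)
    then show ?thesis using eA nA by simp
  qed
  also have "\<dots> = integral {0..\<tau>} A" by (rule eA)
  also have "\<dots> \<le> integral {0..b} A"
  proof (rule integral_subset_le)
    show "{0..\<tau>} \<subseteq> {0..b}" using assms by auto
    show "A integrable_on {0..\<tau>}" by (rule integrable_continuous_interval[OF Ac'])
    show "A integrable_on {0..b}" by (rule integrable_continuous_interval[OF Ac])
  qed (use Apos in auto)
  finally show ?thesis .
qed

lemma exp_integral:
  fixes r b c :: real assumes "r > 0" "0 \<le> b"
  shows "integral {0..b} (\<lambda>s. c * exp (- r * s)) = c / r * (1 - exp (- r * b))"
proof -
  have "((\<lambda>s. c * exp (- r * s)) has_integral ((- c / r * exp (- r * b)) - (- c / r * exp (- r * 0)))) {0..b}"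
  proof (rule fundamental_theorem_of_calculus[OF assms(2)])
    fix x :: real
    show "((\<lambda>s. - c / r * exp (- r * s)) has_vector_derivative c * exp (- r * x)) (at x within {0..b})"
      unfolding has_real_derivative_iff_has_vector_derivative[symmetric]
      by (rule DERIV_cong, (rule derivative_eq_intros refl)+) (use assms in \<open>simp add: field_simps\<close>)
  qed
  then have "integral {0..b} (\<lambda>s. c * exp (- r * s)) = (- c / r * exp (- r * b)) - (- c / r * exp (- r * 0))"
    by (rule integral_unique)
  then show ?thesis using assms by (simp add: field_simps)
qed


theorem proposition4p1:
  fixes M :: "'a measure" and F :: "real \<Rightarrow> 'a measure" and B :: "real \<Rightarrow> 'a \<Rightarrow> real"
    and T r \<mu> \<sigma> \<rho> m0 m1 \<kappa> \<delta> \<alpha> I fI t z h :: real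
  assumes "T > 0" and "r > 0" and "\<sigma> > 0" and "\<rho> > 0" and "m0 \<ge> 0" and "m1 \<ge> 0"
    and "\<kappa> > 0" and "\<delta> > 0" and "0 < \<alpha>" and "\<alpha> < 1" and "I > 0" and "fI > 0"
    and "usual_filtered_prob_space M F"
    and "F_brownian_motion M F B"
    and "0 \<le> t" and "t \<le> T" and "z > 0" and "h > 0"
  shows "0 \<le> Jhat M F B T r \<mu> \<sigma> \<rho> m0 m1 \<kappa> \<delta> \<alpha> I fI t z h
       \<and> Jhat M F B T r \<mu> \<sigma> \<rho> m0 m1 \<kappa> \<delta> \<alpha> I fI t z h
           \<le> I * z / r * (1 - exp (- r * (T - t)))"
proof -
  note a = assms
  have P: "prob_space M" and filt: "filtration (space M) F" and subF: "\<And>u. sets (F u) \<subseteq> sets M"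
    using a(13) unfolding usual_filtered_prob_space_def by blast+
  have meas: "B s \<in> borel_measurable M" if "s \<ge> 0" for s
  proof (rule measurable_from_subalg)
    show "subalgebra M (F s)" unfolding subalgebra_def using subF filtration.space_F[OF filt] by auto
    show "B s \<in> borel_measurable (F s)" using a(14) that unfolding F_brownian_motion_def by auto
  qed
  have cont: "\<And>\<omega>. \<omega> \<in> space M \<Longrightarrow> continuous_on {0..} (\<lambda>s. B s \<omega>)"
    and B0: "\<And>\<omega>. \<omega> \<in> space M \<Longrightarrow> B 0 \<omega> = 0"
    and incr: "\<And>s u. 0 \<le> u \<Longrightarrow> u < s \<Longrightarrow>
        distributed M lborel (\<lambda>\<omega>. B s \<omega> - B u \<omega>) (\<lambda>x. ennreal (normal_density 0 (sqrt (s - u)) x))"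
    using a(14) unfolding F_brownian_motion_def by auto
  define \<theta> where "\<theta> = theta \<mu> r \<sigma>"
  define S where "S = {\<tau>. stopping_time F \<tau> \<and> (\<forall>\<omega>\<in>space M. 0 \<le> \<tau> \<omega> \<and> \<tau> \<omega> \<le> T - t)}"
  define D where "D s \<omega> = exp (- (\<integral>u\<in>{0..s}. (\<rho> + MH m0 m1 \<kappa> (H1 \<delta> h u)) \<partial>lborel)) * fI
               * deriv (\<lambda>h'. Wfun M B T \<theta> r \<rho> m0 m1 \<kappa> \<delta> \<alpha> fI (t + s)
                                   (Z1 B \<theta> r \<rho> m0 m1 \<kappa> \<delta> z h s \<omega>) h') (H1 \<delta> h s)" for s \<omega>
  define A where "A s \<omega> = I * z * exp (- r * s - \<theta> * B s \<omega> - \<theta>\<^sup>2 / 2 * s)" for s \<omega>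
  define val where "val \<tau> = (\<integral>\<omega>. (\<integral>s\<in>{0..\<tau> \<omega>}. (A s \<omega> - D s \<omega>) \<partial>lborel) \<partial>M)" for \<tau>
  define b0 where "b0 = I * z / r * (1 - exp (- r * (T - t)))"
  have J: "Jhat M F B T r \<mu> \<sigma> \<rho> m0 m1 \<kappa> \<delta> \<alpha> I fI t z h = (SUP \<tau>\<in>S. val \<tau>)"
    unfolding Jhat_def Let_def \<theta>_def[symmetric] S_def val_def A_def D_def by simp
  have b0nn: "0 \<le> b0" unfolding b0_def using a by (simp add: mult_nonneg_nonneg)
  define k where "k s = I * z * exp (- r * s - \<theta>\<^sup>2 / 2 * s)" for s
  have kc: "continuous_on UNIV k" unfolding k_def by (intro continuous_intros)
  have kpos: "0 \<le> k s" for s unfolding k_def using a by simp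
  have BK: "integrable M (\<lambda>\<omega>. (\<integral>s\<in>{0..T - t}. k s * exp ((- \<theta>) * (B s \<omega> - B 0 \<omega>)) \<partial>lborel))
     \<and> (\<integral>\<omega>. (\<integral>s\<in>{0..T - t}. k s * exp ((- \<theta>) * (B s \<omega> - B 0 \<omega>)) \<partial>lborel) \<partial>M)
       = integral {0..T - t} (\<lambda>s. k s * exp ((- \<theta>)\<^sup>2 * (s - 0) / 2))"
    by (rule bochner_key[OF P meas cont incr]) (use a kc kpos in auto)
  have kint: "integral {0..T - t} (\<lambda>s. k s * exp ((- \<theta>)\<^sup>2 * (s - 0) / 2)) = b0"
  proof -
    have "integral {0..T - t} (\<lambda>s. k s * exp ((- \<theta>)\<^sup>2 * (s - 0) / 2)) = integral {0..T - t} (\<lambda>s. (I * z) * exp (- r * s))"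
      by (intro integral_cong) (simp add: k_def mult.assoc exp_add[symmetric] algebra_simps power2_eq_square)
    also have "\<dots> = b0" unfolding b0_def using a by (intro exp_integral) auto
    finally show ?thesis .
  qed
  have Aeq: "(\<integral>s\<in>{0..T - t}. k s * exp ((- \<theta>) * (B s \<omega> - B 0 \<omega>)) \<partial>lborel) = integral {0..T - t} (\<lambda>s. A s \<omega>)"
    if \<omega>: "\<omega> \<in> space M" for \<omega>
  proof -
    have Ac: "continuous_on {0..T - t} (\<lambda>s. A s \<omega>)" unfolding A_def
      by (intro continuous_intros continuous_on_subset[OF cont[OF \<omega>]]) auto
    have "(\<integral>s\<in>{0..T - t}. k s * exp ((- \<theta>) * (B s \<omega> - B 0 \<omega>)) \<partial>lborel) = (\<integral>s\<in>{0..T - t}. A s \<omega> \<partial>lborel)"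
      by (intro set_lebesgue_integral_cong allI impI)
         (auto simp: B0[OF \<omega>] k_def A_def exp_add[symmetric] algebra_simps)
    also have "\<dots> = integral {0..T - t} (\<lambda>s. A s \<omega>)"
      by (rule set_borel_integral_eq_integral(2)[OF borel_integrable_atLeastAtMost'[OF Ac]])
    finally show ?thesis .
  qed
  have bound: "val \<tau> \<le> b0" if \<tau>: "\<And>\<omega>. \<omega> \<in> space M \<Longrightarrow> 0 \<le> \<tau> \<omega> \<and> \<tau> \<omega> \<le> T - t" for \<tau>
  proof -
    have pt: "(\<integral>s\<in>{0..\<tau> \<omega>}. (A s \<omega> - D s \<omega>) \<partial>lborel)
        \<le> (\<integral>s\<in>{0..T - t}. k s * exp ((- \<theta>) * (B s \<omega> - B 0 \<omega>)) \<partial>lborel)" if \<omega>: "\<omega> \<in> space M" for \<omega>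
      unfolding Aeq[OF \<omega>]
    proof (rule set_int_le)
      show "continuous_on {0..T - t} (\<lambda>s. A s \<omega>)" unfolding A_def
        by (intro continuous_intros continuous_on_subset[OF cont[OF \<omega>]]) auto
      show "0 \<le> A s \<omega>" for s unfolding A_def using a by simp
      show "0 \<le> \<tau> \<omega>" "\<tau> \<omega> \<le> T - t" using \<tau>[OF \<omega>] by auto
      show "0 \<le> D s \<omega>" if s: "s \<in> {0..\<tau> \<omega>}" for s
      proof -
        have s0: "0 \<le> s" "s \<le> T - t" using s \<tau>[OF \<omega>] by auto
        have "0 \<le> deriv (\<lambda>h'. Wfun M B T \<theta> r \<rho> m0 m1 \<kappa> \<delta> \<alpha> fI (t + s)
                                   (Z1 B \<theta> r \<rho> m0 m1 \<kappa> \<delta> z h s \<omega>) h') (H1 \<delta> h s)"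
        proof (rule Wfun_deriv[OF _ _ _ _ _ _ _ _ _ P meas cont incr])
          show "0 < Z1 B \<theta> r \<rho> m0 m1 \<kappa> \<delta> z h s \<omega>" unfolding Z1_def using a by simp
          show "0 < H1 \<delta> h s" unfolding H1_def using a by simp
        qed (use a s0 in auto)
        then show ?thesis unfolding D_def using a by simp
      qed
    qed
    show ?thesis
    proof (cases "integrable M (\<lambda>\<omega>. (\<integral>s\<in>{0..\<tau> \<omega>}. (A s \<omega> - D s \<omega>) \<partial>lborel))")
      case True
      have "val \<tau> \<le> (\<integral>\<omega>. (\<integral>s\<in>{0..T - t}. k s * exp ((- \<theta>) * (B s \<omega> - B 0 \<omega>)) \<partial>lborel) \<partial>M)"
        unfolding val_def by (rule integral_mono[OF True]) (use BK pt in auto)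
      then show ?thesis using BK kint by simp
    next
      case False
      then have "val \<tau> = 0" unfolding val_def by (rule not_integrable_integral_eq)
      then show ?thesis using b0nn by simp
    qed
  qed
  have S0: "(\<lambda>_. 0) \<in> S" unfolding S_def using a by (auto intro: stopping_time_const)
  have v0: "val (\<lambda>_. 0) = 0"
  proof -
    have "(\<integral>s\<in>{0..0}. (A s \<omega> - D s \<omega>) \<partial>lborel) = 0" for \<omega>
      unfolding set_lebesgue_integral_def
      by (rule integral_eq_zero_AE) (use AE_lborel_singleton[of 0] in \<open>auto elim: AE_mp\<close>)
    then show ?thesis unfolding val_def by simp
  qed
  have bdd: "bdd_above (val ` S)" by (rule bdd_aboveI2[of _ _ b0]) (use bound in \<open>auto simp: S_def\<close>)
  have "0 \<le> (SUP \<tau>\<in>S. val \<tau>)" by (rule cSUP_upper2[OF bdd S0]) (simp add: v0)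
  moreover have "(SUP \<tau>\<in>S. val \<tau>) \<le> b0" by (rule cSUP_least) (use S0 bound in \<open>auto simp: S_def\<close>)
  ultimately show ?thesis unfolding J b0_def by simp
qed


end
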